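(* Let $P_1$ be the uniform distribution on $[0,\frac12]$, let $P_2$ be the uniform distribution on $[\frac12,1]$, and let $P=\frac34P_1+\frac14P_2$. Then the set $$\Big\{\tfrac13\big(\tfrac18(21-\sqrt3)-2\big),\ \tfrac18(21-\sqrt3)-2,\ \tfrac1{24}(21-\sqrt3)\Big\}$$ forms an optimal set of three-means for $P$, with quantization error $V_3=0.00787482$.
   Context: For a finite set $\alpha\subset\mathbb R$, $V(P;\alpha)=\int\min_{a\in\alpha}(x-a)^2\,dP(x)$; $V_n=\inf\{V(P;\alpha):\mathrm{card}(\alpha)\le n\}$; an optimal set of $n$-means is a set $\alpha$ with $\mathrm{card}(\alpha)\le n$ and $V(P;\alpha)=V_n$. The numerical value of $V_3$ is a decimal approximation as given in the source. *)

theory Defs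
  imports "HOL-Analysis.Analysis"
begin

definition quant_err :: "real measure \<Rightarrow> real set \<Rightarrow> real" where
  "quant_err P \<alpha> = (\<integral>x. Min ((\<lambda>a. (x - a)^2) ` \<alpha>) \<partial>P)"

text \<open>n-th quantization error V_n: infimum over sets with 1 \<le> card \<le> n (card \<ge> 1 forces finiteness and nonemptiness).\<close>
definition quant_Vn :: "real measure \<Rightarrow> nat \<Rightarrow> real" where
  "quant_Vn P n = (INF \<alpha> \<in> {\<alpha>. 1 \<le> card \<alpha> \<and> card \<alpha> \<le> n}. quant_err P \<alpha>)"

definition optimal_n_means :: "real measure \<Rightarrow> nat \<Rightarrow> real set \<Rightarrow> bool" where
  "optimal_n_means P n \<alpha> \<longleftrightarrow> 1 \<le> card \<alpha> \<and> card \<alpha> \<le> n \<and> quant_err P \<alpha> = quant_Vn P n"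

definition P_mix :: "real measure" where
  "P_mix = density lborel (\<lambda>x. ennreal (3/4 * (2 * indicator {0..1/2} x)
                                     + 1/4 * (2 * indicator {1/2..1} x)))"

end

theory Submission
  imports Defs "HOL-Library.Sum_of_Squares"
begin


definition dens :: "real \<Rightarrow> real" where
  "dens x = 3/4 * (2 * indicator {0..1/2} x) + 1/4 * (2 * indicator {1/2..1} x)"

lemma P_mix_eq: "P_mix = density lborel (\<lambda>x. ennreal (dens x))"
  by (simp add: P_mix_def dens_def)

definition cc :: "real \<Rightarrow> real \<Rightarrow> real \<Rightarrow> real" where
  "cc a l r = (if l \<le> r then ((r-a)^3 - (l-a)^3)/3 else 0)"

lemma Ci: fixes a l r :: real shows "integrable lborel (\<lambda>x. (x-a)^2 * indicator {l..r} x)"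
  using borel_integrable_atLeastAtMost[of l r "\<lambda>x. (x-a)^2"] by (auto intro!: continuous_intros)

lemma Cv: fixes a l r :: real shows "(\<integral>x. (x-a)^2 * indicator {l..r} x \<partial>lborel) = cc a l r"
proof (cases "l \<le> r")
  case True
  have "(\<integral>x. indicator {l..r} x *\<^sub>R (x-a)^2 \<partial>lborel) = (r-a)^3/3 - (l-a)^3/3"
  proof (rule integral_FTC_atLeastAtMost[OF True])
    fix x assume "l \<le> x" "x \<le> r"
    have "((\<lambda>x. (x-a)^3/3) has_field_derivative (x-a)^2) (at x within {l..r})"
      by (auto intro!: derivative_eq_intros simp: power2_eq_square)
    then show "((\<lambda>x. (x-a)^3/3) has_vector_derivative (x-a)^2) (at x within {l..r})"
      by (simp add: has_real_derivative_iff_has_vector_derivative)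
  qed (auto intro!: continuous_intros)
  then show ?thesis using True by (simp add: cc_def mult.commute diff_divide_distrib)
next
  case False
  then have "{l..r} = {}" by auto
  then show ?thesis using False by (simp add: cc_def)
qed

definition Fd :: "real \<Rightarrow> real \<Rightarrow> real \<Rightarrow> real" where
  "Fd a y x = dens x * ((x-a)^2 * indicator {..y} x)"

definition Jd :: "real \<Rightarrow> real \<Rightarrow> real" where
  "Jd a y = 3/2 * cc a 0 (min y (1/2)) + 1/2 * cc a (1/2) (min y 1)"

lemma Fd_split: "Fd a y x = 3/2 * ((x-a)^2 * indicator {0..min y (1/2)} x) + 1/2 * ((x-a)^2 * indicator {1/2..min y 1} x)"
  by (auto simp: Fd_def dens_def indicator_def)

lemma Fd_int: "integrable lborel (Fd a y)"
  unfolding Fd_split[abs_def] using Ci by simp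

lemma Fd_val: "(\<integral>x. Fd a y x \<partial>lborel) = Jd a y"
  unfolding Fd_split by (simp add: Ci Cv Jd_def)


definition min3 :: "real \<Rightarrow> real \<Rightarrow> real \<Rightarrow> real \<Rightarrow> real" where
  "min3 a1 a2 a3 x = min ((x-a1)^2) (min ((x-a2)^2) ((x-a3)^2))"

definition TT :: "real \<Rightarrow> real \<Rightarrow> real \<Rightarrow> real" where
  "TT a1 a2 a3 = Jd a1 ((a1+a2)/2) + Jd a2 ((a2+a3)/2) - Jd a2 ((a1+a2)/2) + Jd a3 1 - Jd a3 ((a2+a3)/2)"

lemma sq_le1: fixes a b x :: real assumes "a \<le> b" "x \<le> (a+b)/2" shows "(x-a)^2 \<le> (x-b)^2"
proof -
  have "(x-b)^2 - (x-a)^2 = (b-a)*(a+b-2*x)" by (simp add: power2_eq_square algebra_simps)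
  also have "\<dots> \<ge> 0" using assms by (intro mult_nonneg_nonneg) auto
  finally show ?thesis by simp
qed

lemma sq_le2: fixes a b x :: real assumes "a \<le> b" "x \<ge> (a+b)/2" shows "(x-b)^2 \<le> (x-a)^2"
proof -
  have "(x-a)^2 - (x-b)^2 = (b-a)*(2*x-a-b)" by (simp add: power2_eq_square algebra_simps)
  also have "\<dots> \<ge> 0" using assms by (intro mult_nonneg_nonneg) auto
  finally show ?thesis by simp
qed

lemma dens_zero: "x < 0 \<or> x > 1 \<Longrightarrow> dens x = 0"
  by (auto simp: dens_def indicator_def)

lemma min3_repr:
  fixes a1 a2 a3 :: real assumes "a1 \<le> a2" "a2 \<le> a3"
  shows "dens x * min3 a1 a2 a3 x = Fd a1 ((a1+a2)/2) x + Fd a2 ((a2+a3)/2) x - Fd a2 ((a1+a2)/2) x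
          + Fd a3 1 x - Fd a3 ((a2+a3)/2) x"
proof (cases "x > 1")
  case True then show ?thesis using dens_zero[of x] by (simp add: Fd_def)
next
  case False
  have m: "(a1+a2)/2 \<le> (a2+a3)/2" using assms by simp
  consider "x \<le> (a1+a2)/2" | "(a1+a2)/2 < x" "x \<le> (a2+a3)/2" | "(a2+a3)/2 < x" by linarith
  then show ?thesis
  proof cases
    case 1
    have "(x-a1)^2 \<le> (x-a2)^2" using sq_le1[OF assms(1) 1] .
    moreover have "(x-a2)^2 \<le> (x-a3)^2" using sq_le1[OF assms(2), of x] 1 m by linarith
    ultimately show ?thesis using 1 m False by (simp add: Fd_def min3_def indicator_def)
  next
    case 2
    have "(x-a2)^2 \<le> (x-a1)^2" using sq_le2[OF assms(1), of x] 2 by linarith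
    moreover have "(x-a2)^2 \<le> (x-a3)^2" using sq_le1[OF assms(2), of x] 2 by linarith
    ultimately show ?thesis using 2 m False by (simp add: Fd_def min3_def indicator_def min_def)
  next
    case 3
    have "(x-a3)^2 \<le> (x-a2)^2" using sq_le2[OF assms(2), of x] 3 by linarith
    moreover have "(x-a2)^2 \<le> (x-a1)^2" using sq_le2[OF assms(1), of x] 3 m by linarith
    ultimately show ?thesis using 3 m False by (simp add: Fd_def min3_def indicator_def min_def)
  qed
qed

lemma min3_meas[measurable]: "min3 a1 a2 a3 \<in> borel_measurable lborel"
  unfolding min3_def[abs_def] by measurable

lemma dens_meas[measurable]: "dens \<in> borel_measurable lborel"
  unfolding dens_def[abs_def] by measurable

lemma min3_int:
  fixes a1 a2 a3 :: real assumes "a1 \<le> a2" "a2 \<le> a3"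
  shows "integrable lborel (\<lambda>x. dens x * min3 a1 a2 a3 x)"
    and "(\<integral>x. dens x * min3 a1 a2 a3 x \<partial>lborel) = TT a1 a2 a3"
proof -
  note r = min3_repr[OF assms]
  show "integrable lborel (\<lambda>x. dens x * min3 a1 a2 a3 x)"
    unfolding r by (intro Bochner_Integration.integrable_add Bochner_Integration.integrable_diff Fd_int)
  show "(\<integral>x. dens x * min3 a1 a2 a3 x \<partial>lborel) = TT a1 a2 a3"
    unfolding r by (simp add: Fd_int Fd_val TT_def)
qed

lemma dens_nonneg: "0 \<le> dens x" by (simp add: dens_def)

lemma P_int:
  fixes a1 a2 a3 :: real assumes "a1 \<le> a2" "a2 \<le> a3"
  shows "(\<integral>x. min3 a1 a2 a3 x \<partial>P_mix) = TT a1 a2 a3"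
  unfolding P_mix_eq
  by (subst integral_density) (auto simp: dens_nonneg min3_int[OF assms])



lemma B2ineq: fixes p q r :: real
  assumes "0 \<le> p" "0 \<le> q" "0 \<le> r"
  shows "(p+q+r)^3 \<le> 16*(p^3+q^3/4+r^3)"
  using assms by (sos "(((A<0 * R<1) + (((A<=2 * R<1) * ((R<1/3 * [p + 2*q + ~5*r]^2) + (R<5/3 * [q + ~2*r]^2))) + (((A<=1 * R<1) * ((R<31/3 * [p + ~9/31*q + ~13/31*r]^2) + (R<66/31 * [q + ~2*r]^2))) + ((A<=0 * R<1) * ((R<15 * [p + ~4/9*q + ~1/9*r]^2) + (R<1/27 * [q + ~2*r]^2)))))))")


lemma Jd_lo: fixes a y :: real assumes "0 \<le> y" "y \<le> 1/2" shows "Jd a y = ((y-a)^3 + a^3)/2"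
proof -
  have "cc a (1/2) y = 0"
  proof (cases "y < 1/2")
    case True then show ?thesis by (simp add: cc_def)
  next
    case False then have yy: "y = 1/2" using assms by simp
    show ?thesis unfolding yy by (simp add: cc_def)
  qed
  moreover have "min y (1/2) = y" "min y 1 = y" using assms by auto
  ultimately show ?thesis using assms by (simp add: Jd_def cc_def field_simps)
qed

lemma Jd_hi: fixes a y :: real assumes "1/2 \<le> y" "y \<le> 1"
  shows "Jd a y = ((1/2-a)^3 + a^3)/2 + ((y-a)^3 - (1/2-a)^3)/6"
proof -
  have "min y (1/2) = 1/2" "min y 1 = y" using assms by auto
  then show ?thesis using assms by (simp add: Jd_def cc_def field_simps)
qed

lemma cube_mono: fixes x y :: real assumes "x \<le> y" shows "x^3 \<le> y^3"
  using assms by (simp add: power_mono_odd)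

lemma idL: "(a1::real)^3/2 + (a2-a1)^3/8 - a2^3/18 = (3*a1-a2)^2*(3*a1+5*a2)/72" 
  by (simp add: field_simps power2_eq_square power3_eq_cube)
lemma idR: "(d::real)^3/24 + (c-d)^3/6 - c^3/54 = (3*d-2*c)^2*(8*c-3*d)/216" 
  by (simp add: field_simps power2_eq_square power3_eq_cube)
lemma idW: "(w::real)^3*(2/3) + (1/2-w)^3/6 - 1/108 = (w-1/6)^2*(3*w+5/2)/6"
  by (simp add: field_simps power2_eq_square power3_eq_cube)
lemma phi_id: "(a::real)^3/18 + (1/2-a)^3/3 + (1-a)^3/54 - (4-t)/288 - 8/27*(a-(5-t)/8)^2*((5+2*t)/8-a)
   = -(3*(8*a-5)+2*t)*(t^2-3)/1728" 
  by (simp add: field_simps power2_eq_square power3_eq_cube)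

lemma phi_val: "(a::real)^3/18 + (1/2-a)^3/3 + (1-a)^3/54 - (4 - sqrt 3)/288 = 8/27*(a-(5-sqrt 3)/8)^2*((5+2* sqrt 3)/8-a)"
  using phi_id[of a "sqrt 3"] by simp

lemma L_lb: fixes a1 a2 :: real assumes "0 \<le> a1" "0 \<le> a2"
  shows "a2^3/18 \<le> a1^3/2 + (a2-a1)^3/8"
proof -
  have "0 \<le> (3*a1-a2)^2*(3*a1+5*a2)/72" using assms by simp
  then show ?thesis using idL[of a1 a2] by linarith
qed

lemma sqrt3_bounds: "1.7320508 < sqrt (3::real)" "sqrt (3::real) < 1.7320509"
proof -
  show "1.7320508 < sqrt (3::real)" by (rule real_less_rsqrt) (simp add: power2_eq_square)
  have "sqrt (3::real) < sqrt (1.7320509^2)" by (subst real_sqrt_less_iff) (simp add: power2_eq_square)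
  then show "sqrt (3::real) < 1.7320509" by simp
qed

lemma V_small: "(4 - sqrt 3)/288 \<le> 63/8000" using sqrt3_bounds by simp

lemma TT_B:
  fixes a1 a2 a3 :: real
  assumes h: "0 \<le> a1" "a1 \<le> a2" "a2 \<le> a3" "a3 \<le> 1" and c: "a1 + a2 \<le> 1" "1 < a2 + a3"
  shows "TT a1 a2 a3 = a1^3/2 + (a2-a1)^3/8 + (1/2-a2)^3/3 + (a3-a2)^3/24 + (1-a3)^3/6"
proof -
  have m1: "0 \<le> (a1+a2)/2" "(a1+a2)/2 \<le> 1" and m2: "0 \<le> (a2+a3)/2" "(a2+a3)/2 \<le> 1"
    using h by auto
  have e1: "(a1+a2)/2 - a1 = (a2-a1)/2" "(a1+a2)/2 - a2 = -((a2-a1)/2)"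
       "(a2+a3)/2 - a2 = (a3-a2)/2" "(a2+a3)/2 - a3 = -((a3-a2)/2)" by (auto simp: field_simps)
  have c1: "((a2-a1)/2)^3 = (a2-a1)^3/8" "((a3-a2)/2)^3 = (a3-a2)^3/8"
    by (simp_all add: power_divide)
  have c2: "(-x)^3 = -(x^3)" for x :: real by simp
    have "TT a1 a2 a3 = ((((a1+a2)/2)-a1)^3 + a1^3)/2 + (((1/2-a2)^3 + a2^3)/2 + ((((a2+a3)/2)-a2)^3 - (1/2-a2)^3)/6)
        - ((((a1+a2)/2)-a2)^3 + a2^3)/2 + (((1/2-a3)^3 + a3^3)/2 + ((1-a3)^3 - (1/2-a3)^3)/6)
        - (((1/2-a3)^3 + a3^3)/2 + ((((a2+a3)/2)-a3)^3 - (1/2-a3)^3)/6)"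
      unfolding TT_def using c m1 m2 h by (simp add: Jd_lo[of "(a1+a2)/2"] Jd_hi)
    also have "\<dots> = a1^3/2 + (a2-a1)^3/8 + (1/2-a2)^3/3 + (a3-a2)^3/24 + (1-a3)^3/6"
      unfolding e1 c2 c1 by (simp add: field_simps)
    finally show ?thesis .
qed

lemma TT_lb:
  fixes a1 a2 a3 :: real
  assumes h: "0 \<le> a1" "a1 \<le> a2" "a2 \<le> a3" "a3 \<le> 1"
  shows "(4 - sqrt 3)/288 \<le> TT a1 a2 a3"
proof -
  note V = V_small
  have m1: "0 \<le> (a1+a2)/2" "(a1+a2)/2 \<le> 1" and m2: "0 \<le> (a2+a3)/2" "(a2+a3)/2 \<le> 1"
    using h by auto
  have e1: "(a1+a2)/2 - a1 = (a2-a1)/2" "(a1+a2)/2 - a2 = -((a2-a1)/2)"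
       "(a2+a3)/2 - a2 = (a3-a2)/2" "(a2+a3)/2 - a3 = -((a3-a2)/2)" by (auto simp: field_simps)
  have c1: "((a2-a1)/2)^3 = (a2-a1)^3/8" "((a3-a2)/2)^3 = (a3-a2)^3/8"
    by (simp_all add: power_divide)
  have c2: "(-x)^3 = -(x^3)" for x :: real by simp
  consider "a2 + a3 \<le> 1" | "a1 + a2 \<le> 1" "1 < a2 + a3" | "1 < a1 + a2" using h by linarith
  then show ?thesis
  proof cases
    case 1
    have "TT a1 a2 a3 = ((((a1+a2)/2)-a1)^3 + a1^3)/2 + ((((a2+a3)/2)-a2)^3 + a2^3)/2
        - ((((a1+a2)/2)-a2)^3 + a2^3)/2 + (((1/2-a3)^3 + a3^3)/2 + ((1-a3)^3 - (1/2-a3)^3)/6)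
        - ((((a2+a3)/2)-a3)^3 + a3^3)/2"
      unfolding TT_def using 1 m1 m2 h by (simp add: Jd_lo[of "(a1+a2)/2"] Jd_lo[of "(a2+a3)/2"] Jd_hi)
    also have "\<dots> = a1^3/2 + (a2-a1)^3/8 + (a3-a2)^3/8 + (1/2-a3)^3/3 + (1-a3)^3/6"
      unfolding e1 c2 c1 by (simp add: field_simps)
    finally have T: "TT a1 a2 a3 = a1^3/2 + (a2-a1)^3/8 + (a3-a2)^3/8 + (1/2-a3)^3/3 + (1-a3)^3/6" .
    have L: "0 \<le> a1^3/2 + (a2-a1)^3/8" using L_lb[of a1 a2] h by simp
    show ?thesis
    proof (cases "a3 \<le> 1/2")
      case True
      have "0 \<le> (a3-a2)^3" "0 \<le> (1/2-a3)^3" using h True by simp_all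
      moreover have "(1/2)^3 \<le> (1-a3)^3" using True by (intro cube_mono) simp
      then have "1/8 \<le> (1-a3)^3" by (simp add: power_divide)
      ultimately show ?thesis using T L V by linarith
    next
      case False
      define w where "w = a3 - 1/2"
      have w: "0 \<le> w" using False w_def by simp
      have "(2*w)^3 \<le> (a3-a2)^3" using 1 w_def by (intro cube_mono) simp
      then have d: "8*w^3 \<le> (a3-a2)^3" by (simp add: power_mult_distrib)
      have "0 \<le> (w-1/6)^2*(3*w+5/2)/6" using w by simp
      then have "1/108 \<le> w^3*(2/3) + (1/2-w)^3/6" using idW[of w] by linarith
      moreover have "1/2 - a3 = -w" "1 - a3 = 1/2 - w" using w_def by auto
      then have "(1/2 - a3)^3 = -(w^3)" "(1 - a3)^3 = (1/2 - w)^3" by (simp_all only: c2)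
      ultimately show ?thesis using T L V d by linarith
    qed
  next
    case 2
    have T: "TT a1 a2 a3 = a1^3/2 + (a2-a1)^3/8 + (1/2-a2)^3/3 + (a3-a2)^3/24 + (1-a3)^3/6"
      using TT_B[OF h 2] .
    show ?thesis
    proof (cases "a2 \<le> 1/2")
      case True
      have L: "a2^3/18 \<le> a1^3/2 + (a2-a1)^3/8" using L_lb[of a1 a2] h by simp
      have "0 \<le> (3*(a3-a2)-2*(1-a2))^2*(8*(1-a2)-3*(a3-a2))/216" using h by simp
      then have R: "(1-a2)^3/54 \<le> (a3-a2)^3/24 + (1-a3)^3/6"
        using idR[of "a3-a2" "1-a2"] by simp
      have "0 \<le> 8/27*(a2-(5-sqrt 3)/8)^2*((5+2* sqrt 3)/8-a2)"
        using True sqrt3_bounds by (intro mult_nonneg_nonneg) auto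
      then have P: "(4 - sqrt 3)/288 \<le> a2^3/18 + (1/2-a2)^3/3 + (1-a2)^3/54"
        using phi_val[of a2] by linarith
      show ?thesis using T L R P by linarith
    next
      case False
      define k where "k = 1/2 - a1"
      define w where "w = a2 - 1/2"
      have kw: "0 \<le> w" "w \<le> k" using False 2 k_def w_def by auto
      have "0 \<le> w*(3*k^2+3*k*w-3*w^2)/8"
      proof -
        have "0 \<le> 3*k^2+3*k*w-3*w^2"
        proof -
          have "w*w \<le> k*k" using kw by (intro mult_mono) auto
          moreover have "0 \<le> k*w" using kw by simp
          ultimately show ?thesis by (simp add: power2_eq_square)
        qed
        then show ?thesis using kw by simp
      qed
      moreover have "(k+w)^3/8 - w^3/2 - k^3/8 = w*(3*k^2+3*k*w-3*w^2)/8"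
        by (simp add: field_simps power2_eq_square power3_eq_cube)
      ultimately have K: "k^3/8 \<le> (k+w)^3/8 - w^3/2" by linarith
      have L: "(1/2)^3/18 \<le> a1^3/2 + (1/2-a1)^3/8" using L_lb[of a1 "1/2"] h by simp
      have "(w + (a3-a2) + (1-a3))^3 \<le> 16*(w^3 + (a3-a2)^3/4 + (1-a3)^3)"
        using B2ineq[of w "a3-a2" "1-a3"] kw h by simp
      moreover have "w + (a3-a2) + (1-a3) = 1/2" using w_def by simp
      ultimately have Q: "1/8 \<le> 16*(w^3 + (a3-a2)^3/4 + (1-a3)^3)" by (simp add: power_divide)
      have e: "(a2 - a1)^3 = (k + w)^3" "(1/2 - a1)^3 = k^3" "(1/2 - a2)^3 = -(w^3)" using k_def w_def
        by (simp_all add: c2[symmetric])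
      have L': "1/144 \<le> a1^3/2 + k^3/8" using L e(2) by (simp add: power_divide)
      have T': "TT a1 a2 a3 = a1^3/2 + (k+w)^3/8 - w^3/3 + (a3-a2)^3/24 + (1-a3)^3/6"
        using T e by simp
      have lin: "\<And>T A X W Q R K::real. T = A + X/8 - W/3 + Q/24 + R/6 \<Longrightarrow> 1/144 \<le> A + K/8 \<Longrightarrow>
         1/8 \<le> 16*(W + Q/4 + R) \<Longrightarrow> K/8 \<le> X/8 - W/2 \<Longrightarrow> 1/144+1/768 \<le> T" by argo
      have "1/144 + 1/768 \<le> TT a1 a2 a3"
        by (rule lin[OF T' _ Q K]) (use L' in simp)
      then show ?thesis using V by linarith
    qed
  next
    case 3
    have "TT a1 a2 a3 = (((1/2-a1)^3 + a1^3)/2 + ((((a1+a2)/2)-a1)^3 - (1/2-a1)^3)/6)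
        + (((1/2-a2)^3 + a2^3)/2 + ((((a2+a3)/2)-a2)^3 - (1/2-a2)^3)/6)
        - (((1/2-a2)^3 + a2^3)/2 + ((((a1+a2)/2)-a2)^3 - (1/2-a2)^3)/6)
        + (((1/2-a3)^3 + a3^3)/2 + ((1-a3)^3 - (1/2-a3)^3)/6)
        - (((1/2-a3)^3 + a3^3)/2 + ((((a2+a3)/2)-a3)^3 - (1/2-a3)^3)/6)"
      unfolding TT_def using 3 m1 m2 h by (simp add: Jd_hi)
    also have "\<dots> = ((1/2-a1)^3 + a1^3)/2 + ((((a1+a2)/2)-a1)^3 - (1/2-a1)^3)/6
        + ((((a2+a3)/2)-a2)^3 - (((a1+a2)/2)-a2)^3)/6 + ((1-a3)^3 - (((a2+a3)/2)-a3)^3)/6"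
      by (simp add: field_simps)
    finally have T: "TT a1 a2 a3 = ((1/2-a1)^3 + a1^3)/2 + ((((a1+a2)/2)-a1)^3 - (1/2-a1)^3)/6
        + ((((a2+a3)/2)-a2)^3 - (((a1+a2)/2)-a2)^3)/6 + ((1-a3)^3 - (((a2+a3)/2)-a3)^3)/6" .
    have "(1/2-a1)^3 \<le> (((a1+a2)/2)-a1)^3" using 3 by (intro cube_mono) simp
    moreover have "(((a1+a2)/2)-a2)^3 \<le> (((a2+a3)/2)-a2)^3" using h by (intro cube_mono) simp
    moreover have "(((a2+a3)/2)-a3)^3 \<le> (1-a3)^3" using h by (intro cube_mono) simp
    moreover have "(1/2-a1)^3 + a1^3 = 1/32 + 3/2*(a1-1/4)^2"
      by (simp add: field_simps power2_eq_square power3_eq_cube)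
    moreover have "0 \<le> (a1-1/4)^2" by simp
    ultimately show ?thesis using T V by argo
  qed
qed



definition cl :: "real \<Rightarrow> real" where "cl a = max 0 (min 1 a)"

lemma cl_sq: fixes x a :: real assumes "0 \<le> x" "x \<le> 1" shows "(x - cl a)^2 \<le> (x - a)^2"
proof -
  have "\<bar>x - cl a\<bar> \<le> \<bar>x - a\<bar>" using assms by (auto simp: cl_def)
  then show ?thesis by (simp add: abs_le_square_iff)
qed

lemma cl_mono: "a \<le> b \<Longrightarrow> cl a \<le> cl b" by (auto simp: cl_def)
lemma cl_range: "0 \<le> cl a" "cl a \<le> 1" by (auto simp: cl_def)

lemma TT_clamp:
  fixes a1 a2 a3 :: real assumes "a1 \<le> a2" "a2 \<le> a3"
  shows "TT (cl a1) (cl a2) (cl a3) \<le> TT a1 a2 a3"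
proof -
  have b: "cl a1 \<le> cl a2" "cl a2 \<le> cl a3" using assms cl_mono by auto
  have "(\<integral>x. dens x * min3 (cl a1) (cl a2) (cl a3) x \<partial>lborel) \<le> (\<integral>x. dens x * min3 a1 a2 a3 x \<partial>lborel)"
  proof (rule integral_mono[OF min3_int(1)[OF b] min3_int(1)[OF assms]])
    fix x :: real
    show "dens x * min3 (cl a1) (cl a2) (cl a3) x \<le> dens x * min3 a1 a2 a3 x"
    proof (cases "0 \<le> x \<and> x \<le> 1")
      case True
      then have "min3 (cl a1) (cl a2) (cl a3) x \<le> min3 a1 a2 a3 x"
        unfolding min3_def using cl_sq[of x] by (intro min.mono) auto
      then show ?thesis by (intro mult_left_mono dens_nonneg)
    next
      case False then show ?thesis using dens_zero[of x] by auto
    qed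
  qed
  then show ?thesis using min3_int(2)[OF b] min3_int(2)[OF assms] by simp
qed

lemma set_repr:
  fixes A :: "real set" assumes "1 \<le> card A" "card A \<le> 3"
  shows "\<exists>a1 a2 a3. a1 \<le> a2 \<and> a2 \<le> a3 \<and> A = {a1, a2, a3}"
proof -
  have fin: "finite A" using assms(1) card.infinite by force
  define xs where "xs = sorted_list_of_set A"
  have xs: "sorted xs" "set xs = A" "length xs = card A"
    using fin by (auto simp: xs_def)
  have "length xs = 1 \<or> length xs = 2 \<or> length xs = 3" using assms xs(3) by linarith
  then show ?thesis
  proof (elim disjE)
    assume "length xs = 1"
    then obtain x where "xs = [x]" by (auto simp: length_Suc_conv)
    then show ?thesis using xs by auto
  next
    assume "length xs = 2"
    then obtain x y where "xs = [x, y]" by (auto simp: length_Suc_conv numeral_2_eq_2)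
    then show ?thesis using xs by (intro exI[of _ x] exI[of _ y] exI[of _ y]) auto
  next
    assume "length xs = 3"
    then obtain x y z where "xs = [x, y, z]" by (auto simp: length_Suc_conv numeral_3_eq_3)
    then show ?thesis using xs by (intro exI[of _ x] exI[of _ y] exI[of _ z]) auto
  qed
qed

lemma qe3: "quant_err P {a1, a2, a3} = (\<integral>x. min3 a1 a2 a3 x \<partial>P)"
  unfolding quant_err_def min3_def by simp

lemma lower:
  fixes A :: "real set" assumes "1 \<le> card A" "card A \<le> 3"
  shows "(4 - sqrt 3)/288 \<le> quant_err P_mix A"
proof -
  obtain a1 a2 a3 where a: "a1 \<le> a2" "a2 \<le> a3" "A = {a1, a2, a3}" using set_repr[OF assms] by blast
  have "quant_err P_mix A = TT a1 a2 a3" using a by (simp add: qe3 P_int)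
  moreover have "TT (cl a1) (cl a2) (cl a3) \<le> TT a1 a2 a3" using TT_clamp a by simp
  moreover have "(4 - sqrt 3)/288 \<le> TT (cl a1) (cl a2) (cl a3)"
    using a by (intro TT_lb cl_range cl_mono) auto
  ultimately show ?thesis by linarith
qed

lemma optval:
  fixes s :: real assumes s: "s = sqrt 3"
  defines "b1 \<equiv> (1/3) * ((1/8) * (21 - s) - 2)" and "b2 \<equiv> (1/8) * (21 - s) - 2" and "b3 \<equiv> (1/24) * (21 - s)"
  shows "b1 < b2" "b2 < b3" "quant_err P_mix {b1, b2, b3} = (4 - s)/288"
proof -
  have sb: "1.7320508 < s" "s < 1.7320509" using sqrt3_bounds s by auto
  have e: "b2 = (5-s)/8" "b1 = b2/3" "b3 = (21-s)/24" unfolding b1_def b2_def b3_def by (simp_all add: field_simps)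
  show "b1 < b2" "b2 < b3" using e sb by auto
  have h: "0 \<le> b1" "b1 \<le> b2" "b2 \<le> b3" "b3 \<le> 1" "b1 + b2 \<le> 1" "1 < b2 + b3" using e sb by auto
  have T: "TT b1 b2 b3 = b1^3/2 + (b2-b1)^3/8 + (1/2-b2)^3/3 + (b3-b2)^3/24 + (1-b3)^3/6"
    using TT_B[OF h] .
  have z1: "3*b1 - b2 = 0" using e(2) by simp
  have L: "b1^3/2 + (b2-b1)^3/8 = b2^3/18"
    using idL[of b1 b2, unfolded z1] by simp
  have z: "3*(b3-b2) - 2*(1-b2) = 0" using e by (simp add: field_simps)
  have R: "(b3-b2)^3/24 + (1-b3)^3/6 = (1-b2)^3/54"
    using idR[of "b3-b2" "1-b2", unfolded z] by simp
  have P: "b2^3/18 + (1/2-b2)^3/3 + (1-b2)^3/54 = (4 - s)/288"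
  proof -
    have z2: "b2 - (5 - sqrt 3)/8 = 0" using e(1) s by simp
    show ?thesis using phi_val[of b2, unfolded z2] s by simp
  qed
  have "TT b1 b2 b3 = (4 - s)/288" using T L R P by linarith
  then show "quant_err P_mix {b1, b2, b3} = (4 - s)/288"
    using h by (simp add: qe3 P_int)
qed

theorem lemma4p5:
  shows "optimal_n_means P_mix 3
           {(1/3) * ((1/8) * (21 - sqrt 3) - 2), (1/8) * (21 - sqrt 3) - 2, (1/24) * (21 - sqrt 3)}
         \<and> \<bar>quant_Vn P_mix 3 - 0.00787482\<bar> \<le> 0.000000005"
proof -
  define s where "s = sqrt (3::real)"
  define b1 where "b1 = (1/3) * ((1/8) * (21 - s) - 2)"
  define b2 where "b2 = (1/8) * (21 - s) - 2"
  define b3 where "b3 = (1/24) * (21 - s)"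
  note o = optval[OF s_def, folded b1_def b2_def b3_def]
  have card: "card {b1, b2, b3} = 3" using o(1,2) by auto
  have Vn: "quant_Vn P_mix 3 = (4 - s)/288"
    unfolding quant_Vn_def
  proof (rule cInf_eq_minimum)
    show "(4 - s)/288 \<in> quant_err P_mix ` {\<alpha>. 1 \<le> card \<alpha> \<and> card \<alpha> \<le> 3}"
      using o(3) card by (intro image_eqI[of _ _ "{b1, b2, b3}"]) auto
  next
    fix x assume "x \<in> quant_err P_mix ` {\<alpha>. 1 \<le> card \<alpha> \<and> card \<alpha> \<le> 3}"
    then show "(4 - s)/288 \<le> x" using lower s_def by auto
  qed
  have opt: "optimal_n_means P_mix 3 {b1, b2, b3}"
    unfolding optimal_n_means_def using card Vn o(3) by simp
  have sb: "1.7320508 < s" "s < 1.7320509" using sqrt3_bounds s_def by auto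
  have num: "\<bar>quant_Vn P_mix 3 - 0.00787482\<bar> \<le> 0.000000005"
    unfolding Vn using sb by (simp add: abs_le_iff)
  show ?thesis using opt num unfolding b1_def b2_def b3_def s_def by simp
qed


end
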